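(* Let $\phi\colon[0,+\infty)\to(0,+\infty)$ satisfy $\int_{\mathbb{R}}\min\{1,|x|\}\,\phi(|x|)\,dx<+\infty$ and suppose there is an increasing function $\psi\colon[0,+\infty)\to[0,+\infty)$ such that $$\inf_{t>0}\frac{R^2\phi(Rt)-r^2\phi(rt)}{\phi(t)}\ge\psi(R)-\psi(r)\quad\text{for all }R\ge r\ge0.$$ If $A,B\subset\mathbb{R}$ are segments with $|A|\le|B|$, then, setting $c_\phi=P_\phi((0,1))$, $$P_\phi(A)+c_\phi\big(\psi(|B|)-\psi(|A|)\big)\le P_\phi(B).$$
   Context: For measurable $E\subset\mathbb{R}$, $P_\phi(E)=\frac12\int_{\mathbb{R}}\int_{\mathbb{R}}|\chi_E(x)-\chi_E(y)|\,\phi(|x-y|)\,dx\,dy=\int_E\int_{E^c}\phi(|x-y|)\,dx\,dy$. A segment is a bounded interval of positive length, and $|A|$ denotes its length. *)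

theory Defs
  imports "HOL-Analysis.Analysis"
begin

definition nl_perimeter :: "(real \<Rightarrow> real) \<Rightarrow> real set \<Rightarrow> ennreal" where
  "nl_perimeter phi E =
     (\<integral>\<^sup>+ x. indicator E x * (\<integral>\<^sup>+ y. indicator (- E) y * ennreal (phi \<bar>x - y\<bar>) \<partial>lborel) \<partial>lborel)"

definition is_segment :: "real set \<Rightarrow> bool" where
  "is_segment A \<longleftrightarrow> (\<exists>a b. a < b \<and>
     (A = {a<..<b} \<or> A = {a..b} \<or> A = {a<..b} \<or> A = {a..<b}))"

end

theory Submission imports Defs begin

lemma cut_meas:
  fixes a b h :: real assumes ab: "a < b"
  shows "emeasure lborel {x. a<x \<and> x<b \<and> \<not>(a < x+h \<and> x+h < b)} = ennreal (min \<bar>h\<bar> (b-a))"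
proof (cases "h \<ge> 0")
  case True
  show ?thesis
  proof (cases "b - h \<le> a")
    case True
    with \<open>h\<ge>0\<close> have "{x. a<x \<and> x<b \<and> \<not>(a < x+h \<and> x+h < b)} = {a<..<b}" by auto
    then show ?thesis using ab True \<open>h\<ge>0\<close> by (simp add: min_def)
  next
    case False
    with \<open>h\<ge>0\<close> have "{x. a<x \<and> x<b \<and> \<not>(a < x+h \<and> x+h < b)} = {b-h..<b}" by auto
    then show ?thesis using ab False \<open>h\<ge>0\<close> by (simp add: min_def)
  qed
next
  case False
  show ?thesis
  proof (cases "a - h \<ge> b")
    case True
    with False have "{x. a<x \<and> x<b \<and> \<not>(a < x+h \<and> x+h < b)} = {a<..<b}" by auto
    then show ?thesis using ab True False by (simp add: min_def)
  next
    case F2: False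
    with False have "{x. a<x \<and> x<b \<and> \<not>(a < x+h \<and> x+h < b)} = {a<..a-h}" by auto
    then show ?thesis using ab F2 False by (simp add: min_def)
  qed
qed


lemma meas_phi:
  assumes "(\<lambda>x. phi \<bar>x\<bar>) \<in> borel_measurable borel" "f \<in> borel_measurable M"
  shows "(\<lambda>p. phi \<bar>f p\<bar> :: real) \<in> borel_measurable M"
  using measurable_compose[OF assms(2) assms(1)] by simp

lemma perim_Ioo:
  fixes phi :: "real \<Rightarrow> real" and a b :: real
  assumes phi_meas: "(\<lambda>x. phi \<bar>x\<bar>) \<in> borel_measurable borel" and ab: "a < b"
  shows "nl_perimeter phi {a<..<b} = (\<integral>\<^sup>+h. ennreal (phi \<bar>h\<bar>) * ennreal (min \<bar>h\<bar> (b-a)) \<partial>lborel)"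
proof -
  let ?I = "{a<..<b}"
  have m1: "(\<lambda>p. phi \<bar>snd p\<bar>) \<in> borel_measurable (lborel \<Otimes>\<^sub>M lborel)"
    by (rule meas_phi[OF phi_meas]) simp
  have m2: "(\<lambda>y. phi \<bar>x - y\<bar>) \<in> borel_measurable borel" for x
    by (rule meas_phi[OF phi_meas]) simp
  have inner: "(\<integral>\<^sup>+y. indicator (-?I) y * ennreal (phi \<bar>x-y\<bar>) \<partial>lborel)
      = (\<integral>\<^sup>+h. indicator (-?I) (x+h) * ennreal (phi \<bar>h\<bar>) \<partial>lborel)" for x
    using nn_integral_real_affine[where c=1 and t=x and f="\<lambda>y. indicator (-?I) y * ennreal (phi \<bar>x-y\<bar>)"] m2[of x]
    by simp
  have "nl_perimeter phi ?I = (\<integral>\<^sup>+x. \<integral>\<^sup>+h. indicator ?I x * indicator (-?I) (x+h) * ennreal (phi \<bar>h\<bar>) \<partial>lborel \<partial>lborel)"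
    unfolding nl_perimeter_def inner
  proof (intro nn_integral_cong)
    fix x :: real
    have m3: "(\<lambda>h. indicator (-?I) (x+h) * ennreal (phi \<bar>h\<bar>)) \<in> borel_measurable borel"
      using phi_meas by measurable
    show "indicator ?I x * (\<integral>\<^sup>+h. indicator (-?I) (x+h) * ennreal (phi \<bar>h\<bar>) \<partial>lborel)
      = (\<integral>\<^sup>+h. indicator ?I x * indicator (-?I) (x+h) * ennreal (phi \<bar>h\<bar>) \<partial>lborel)"
      using nn_integral_cmult[OF m3[unfolded measurable_lborel2[symmetric]], of "indicator ?I x"]
      by (simp add: mult.assoc)
  qed
  also have "\<dots> = (\<integral>\<^sup>+h. \<integral>\<^sup>+x. indicator ?I x * indicator (-?I) (x+h) * ennreal (phi \<bar>h\<bar>) \<partial>lborel \<partial>lborel)"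
    by (rule lborel_pair.Fubini'[symmetric]) (use m1 in \<open>simp add: case_prod_unfold; measurable\<close>)
  also have "\<dots> = (\<integral>\<^sup>+h. ennreal (phi \<bar>h\<bar>) * ennreal (min \<bar>h\<bar> (b-a)) \<partial>lborel)"
  proof (intro nn_integral_cong)
    fix h :: real
    have "(\<lambda>x. indicator ?I x * indicator (-?I) (x+h) :: ennreal)
        = indicator {x. a<x \<and> x<b \<and> \<not>(a < x+h \<and> x+h < b)}"
      by (auto simp: fun_eq_iff indicator_def)
    then have "(\<integral>\<^sup>+x. indicator ?I x * indicator (-?I) (x+h) * ennreal (phi \<bar>h\<bar>) \<partial>lborel)
       = (\<integral>\<^sup>+x. indicator {x. a<x \<and> x<b \<and> \<not>(a < x+h \<and> x+h < b)} x \<partial>lborel) * ennreal (phi \<bar>h\<bar>)"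
      by (subst nn_integral_multc) auto
    also have "\<dots> = ennreal (phi \<bar>h\<bar>) * ennreal (min \<bar>h\<bar> (b-a))"
      using cut_meas[OF ab, of h] by (simp add: mult.commute)
    finally show "(\<integral>\<^sup>+x. indicator ?I x * indicator (-?I) (x+h) * ennreal (phi \<bar>h\<bar>) \<partial>lborel)
       = ennreal (phi \<bar>h\<bar>) * ennreal (min \<bar>h\<bar> (b-a))" .
  qed
  finally show ?thesis .
qed


lemma perim_seg:
  assumes "is_segment S"
  shows "\<exists>a b. a < b \<and> measure lborel S = b - a \<and> nl_perimeter phi S = nl_perimeter phi {a<..<b}"
proof -
  obtain a b where ab: "a < b" and S: "S = {a<..<b} \<or> S = {a..b} \<or> S = {a<..b} \<or> S = {a..<b}"
    using assms unfolding is_segment_def by blast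
  have ae: "AE x in lborel. x \<noteq> a \<and> x \<noteq> b"
    using AE_lborel_singleton[of a] AE_lborel_singleton[of b] by eventually_elim auto
  have ind: "x \<noteq> a \<and> x \<noteq> b \<Longrightarrow> indicator S x = (indicator {a<..<b} x :: ennreal)" for x
    using S by (auto simp: indicator_def)
  have indc: "x \<noteq> a \<and> x \<noteq> b \<Longrightarrow> indicator (-S) x = (indicator (-{a<..<b}) x :: ennreal)" for x
    using S by (auto simp: indicator_def)
  have "nl_perimeter phi S = nl_perimeter phi {a<..<b}"
    unfolding nl_perimeter_def
  proof (intro nn_integral_cong_AE)
    show "AE x in lborel. indicator S x * (\<integral>\<^sup>+ y. indicator (- S) y * ennreal (phi \<bar>x - y\<bar>) \<partial>lborel) =
        indicator {a<..<b} x * (\<integral>\<^sup>+ y. indicator (- {a<..<b}) y * ennreal (phi \<bar>x - y\<bar>) \<partial>lborel)"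
    proof (rule AE_mp[OF ae], intro AE_I2 impI)
      fix x assume "x \<noteq> a \<and> x \<noteq> b"
      moreover have "(\<integral>\<^sup>+ y. indicator (- S) y * ennreal (phi \<bar>x - y\<bar>) \<partial>lborel)
          = (\<integral>\<^sup>+ y. indicator (- {a<..<b}) y * ennreal (phi \<bar>x - y\<bar>) \<partial>lborel)"
        by (intro nn_integral_cong_AE, rule AE_mp[OF ae]) (auto simp: indc)
      ultimately show "indicator S x * (\<integral>\<^sup>+ y. indicator (- S) y * ennreal (phi \<bar>x - y\<bar>) \<partial>lborel) =
        indicator {a<..<b} x * (\<integral>\<^sup>+ y. indicator (- {a<..<b}) y * ennreal (phi \<bar>x - y\<bar>) \<partial>lborel)"
        by (simp add: ind)
    qed
  qed
  moreover have "measure lborel S = b - a" using S ab by auto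
  ultimately show ?thesis using ab by blast
qed

lemma scale:
  fixes phi :: "real \<Rightarrow> real"
  assumes phi_pos: "\<forall>t\<ge>0. phi t > 0"
    and phi_meas: "(\<lambda>x. phi \<bar>x\<bar>) \<in> borel_measurable borel" and L: "L > 0"
  shows "(\<integral>\<^sup>+h. ennreal (phi \<bar>h\<bar>) * ennreal (min \<bar>h\<bar> L) \<partial>lborel)
       = (\<integral>\<^sup>+u. ennreal (L\<^sup>2 * phi \<bar>L*u\<bar> * min \<bar>u\<bar> 1) \<partial>lborel)"
proof -
  have m: "(\<lambda>u. phi \<bar>L*u\<bar>) \<in> borel_measurable borel"
    by (rule meas_phi[OF phi_meas]) simp
  have "(\<integral>\<^sup>+h. ennreal (phi \<bar>h\<bar>) * ennreal (min \<bar>h\<bar> L) \<partial>lborel)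
      = \<bar>L\<bar> * (\<integral>\<^sup>+u. ennreal (phi \<bar>0 + L*u\<bar>) * ennreal (min \<bar>0 + L*u\<bar> L) \<partial>lborel)"
  proof (rule nn_integral_real_affine)
    show "(\<lambda>h. ennreal (phi \<bar>h\<bar>) * ennreal (min \<bar>h\<bar> L)) \<in> borel_measurable borel"
      using phi_meas by measurable
  qed (use L in simp)
  also have "\<dots> = (\<integral>\<^sup>+u. ennreal L * (ennreal (phi \<bar>L*u\<bar>) * ennreal (min \<bar>L*u\<bar> L)) \<partial>lborel)"
    using L m by (subst nn_integral_cmult) (auto intro!: borel_measurable_times)
  also have "\<dots> = (\<integral>\<^sup>+u. ennreal (L\<^sup>2 * phi \<bar>L*u\<bar> * min \<bar>u\<bar> 1) \<partial>lborel)"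
  proof (intro nn_integral_cong)
    fix u :: real
    have p: "phi \<bar>L*u\<bar> \<ge> 0" using phi_pos by (meson abs_ge_zero less_imp_le)
    have "min \<bar>L*u\<bar> L = L * min \<bar>u\<bar> 1" using L
      by (simp add: abs_mult min_mult_distrib_left)
    then show "ennreal L * (ennreal (phi \<bar>L*u\<bar>) * ennreal (min \<bar>L*u\<bar> L)) = ennreal (L\<^sup>2 * phi \<bar>L*u\<bar> * min \<bar>u\<bar> 1)"
      using L p by (simp add: ennreal_mult'' [symmetric] ennreal_mult[symmetric] power2_eq_square mult_ac)
  qed
  finally show ?thesis .
qed


theorem mainTheorem8:
  fixes phi psi :: "real \<Rightarrow> real" and A B :: "real set"
  assumes phi_pos: "\<forall>t\<ge>0. phi t > 0"
    and phi_meas: "(\<lambda>x. phi \<bar>x\<bar>) \<in> borel_measurable borel"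
    and phi_int: "(\<integral>\<^sup>+ x. ennreal (min 1 \<bar>x\<bar> * phi \<bar>x\<bar>) \<partial>lborel) < \<infinity>"
    and psi_nonneg: "\<forall>t\<ge>0. psi t \<ge> 0"
    and psi_mono: "mono_on {0..} psi"
    and psi_cond: "\<forall>R r. 0 \<le> r \<and> r \<le> R \<longrightarrow>
        (INF t\<in>{0<..}. ereal ((R\<^sup>2 * phi (R * t) - r\<^sup>2 * phi (r * t)) / phi t))
          \<ge> ereal (psi R - psi r)"
    and A_seg: "is_segment A" and B_seg: "is_segment B"
    and AB: "measure lborel A \<le> measure lborel B"
  shows "nl_perimeter phi A
           + nl_perimeter phi {0<..<1} * ennreal (psi (measure lborel B) - psi (measure lborel A))
         \<le> nl_perimeter phi B"
proof -
  obtain a b where ab: "a < b" and mA: "measure lborel A = b - a" and pA: "nl_perimeter phi A = nl_perimeter phi {a<..<b}"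
    using perim_seg[OF A_seg] by blast
  obtain c d where cd: "c < d" and mB: "measure lborel B = d - c" and pB: "nl_perimeter phi B = nl_perimeter phi {c<..<d}"
    using perim_seg[OF B_seg] by blast
  define r where "r = b - a"
  define R where "R = d - c"
  have r: "r > 0" and R: "R > 0" and rR: "r \<le> R" using ab cd AB mA mB by (auto simp: r_def R_def)
  define D where "D = psi R - psi r"
  have D: "D \<ge> 0" using psi_mono rR r unfolding D_def mono_on_def by auto
  let ?G = "\<lambda>L u. ennreal (L\<^sup>2 * phi \<bar>L*u\<bar> * min \<bar>u\<bar> 1)"
  have PA: "nl_perimeter phi A = (\<integral>\<^sup>+u. ?G r u \<partial>lborel)"
    using pA perim_Ioo[OF phi_meas ab] scale[OF phi_pos phi_meas r] by (simp add: r_def)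
  have PB: "nl_perimeter phi B = (\<integral>\<^sup>+u. ?G R u \<partial>lborel)"
    using pB perim_Ioo[OF phi_meas cd] scale[OF phi_pos phi_meas R] by (simp add: R_def)
  have P1: "nl_perimeter phi {0<..<1} = (\<integral>\<^sup>+u. ?G 1 u \<partial>lborel)"
    using perim_Ioo[OF phi_meas, of 0 1] scale[OF phi_pos phi_meas, of 1] by simp
  have mG: "?G L \<in> borel_measurable borel" for L
  proof -
    have "(\<lambda>u. phi \<bar>L*u\<bar>) \<in> borel_measurable borel" by (rule meas_phi[OF phi_meas]) simp
    then show ?thesis by measurable
  qed
  have "nl_perimeter phi A + nl_perimeter phi {0<..<1} * ennreal (psi (measure lborel B) - psi (measure lborel A))
      = (\<integral>\<^sup>+u. ?G r u \<partial>lborel) + (\<integral>\<^sup>+u. ?G 1 u * ennreal D \<partial>lborel)"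
    unfolding PA P1 mA mB r_def[symmetric] R_def[symmetric] D_def[symmetric]
    by (subst nn_integral_multc) (use mG[of 1] mG[of r] in auto)
  also have "\<dots> = (\<integral>\<^sup>+u. ?G r u + ?G 1 u * ennreal D \<partial>lborel)"
    by (rule nn_integral_add[symmetric]) (use mG[of 1] mG[of r] in auto)
  also have "\<dots> \<le> (\<integral>\<^sup>+u. ?G R u \<partial>lborel)"
  proof (rule nn_integral_mono)
    fix u :: real
    show "?G r u + ?G 1 u * ennreal D \<le> ?G R u"
    proof (cases "u = 0")
      case True then show ?thesis by simp
    next
      case False
      define t where "t = \<bar>u\<bar>"
      have t: "t > 0" using False by (simp add: t_def)
      have pt: "phi t > 0" "phi (r*t) > 0" "phi (R*t) > 0" using phi_pos t r R by auto
      have "(INF t\<in>{0<..}. ereal ((R\<^sup>2 * phi (R * t) - r\<^sup>2 * phi (r * t)) / phi t))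
          \<le> ereal ((R\<^sup>2 * phi (R * t) - r\<^sup>2 * phi (r * t)) / phi t)"
        using t by (intro INF_lower) auto
      with psi_cond r rR have "D \<le> (R\<^sup>2 * phi (R * t) - r\<^sup>2 * phi (r * t)) / phi t"
        unfolding D_def by (meson less_imp_le order_trans ereal_less_eq(3))
      then have q: "D * phi t \<le> R\<^sup>2 * phi (R * t) - r\<^sup>2 * phi (r * t)"
        using pt by (simp add: pos_le_divide_eq)
      define m where "m = min t 1"
      have m: "m \<ge> 0" using t by (simp add: m_def)
      have ineq: "r\<^sup>2 * phi (r*t) * m + phi t * m * D \<le> R\<^sup>2 * phi (R*t) * m"
      proof -
        have "(r\<^sup>2 * phi (r*t) + D * phi t) * m \<le> (R\<^sup>2 * phi (R*t)) * m"
          using q m by (intro mult_right_mono) auto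
        then show ?thesis by (simp add: algebra_simps)
      qed
      have eqs: "\<bar>r*u\<bar> = r*t" "\<bar>R*u\<bar> = R*t" "\<bar>1*u\<bar> = t" "min \<bar>u\<bar> 1 = m"
        using r R by (auto simp: t_def m_def abs_mult)
      have "?G r u + ?G 1 u * ennreal D = ennreal (r\<^sup>2 * phi (r*t) * m + phi t * m * D)"
        unfolding eqs using pt m D
        by (simp add: ennreal_plus[symmetric] ennreal_mult'[symmetric] del: ennreal_plus)
      also have "\<dots> \<le> ?G R u" unfolding eqs using ineq by (rule ennreal_leI)
      finally show ?thesis .
    qed
  qed
  also have "\<dots> = nl_perimeter phi B" using PB by simp
  finally show ?thesis .
qed

end
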